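(* Let $(\Omega,\mathcal{F},P)=([0,1],\mathcal{B}([0,1]),\lambda)$ with $\lambda$ Lebesgue measure. For $n\in\mathbb{N}$ and $\varepsilon_n\in(0,1)$ define $S^n_1(\omega)=-\frac{1}{\sqrt{\omega}}$ for $\omega\in[0,\varepsilon_n)$ and $S^n_1(\omega)=\frac{1}{(1-\omega)^{1/(n+1)}}$ for $\omega\in[\varepsilon_n,1]$. Then the sequence $(\varepsilon_n)\subset(0,1)$ can be chosen such that $E[S^n_1]=1$ for all $n\in\mathbb{N}$ and $\varepsilon_n\to0$ as $n\to\infty$. *)

theory Defs
  imports "HOL-Analysis.Analysis"
begin

text \<open>The random variable S^n_1 on [0,1] with threshold e:
  -1/sqrt w on [0,e), and 1/(1-w)^(1/(n+1)) on [e,1]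
  (the value at w = 1 is a null set; there 1/0 = 0 by HOL convention).\<close>
definition S1 :: "nat \<Rightarrow> real \<Rightarrow> real \<Rightarrow> real" where
  "S1 n e w = (if w < e then - 1 / sqrt w else 1 / ((1 - w) powr (1 / real (n + 1))))"

end

theory Submission
  imports Defs
begin

lemma piece1:
  assumes e: "0 < e"
  shows "(S1 n e has_integral (- 2 * sqrt e)) {0..e}"
proof -
  have "(S1 n e has_integral ((\<lambda>w. -2 * sqrt w) e - (\<lambda>w. -2 * sqrt w) 0)) {0..e}"
  proof (rule fundamental_theorem_of_calculus_interior)
    show "0 \<le> e" using e by simp
    show "continuous_on {0..e} (\<lambda>w. -2 * sqrt w)" by (intro continuous_intros)
    fix x assume x: "x \<in> {0<..<e}"
    have "((\<lambda>w. -2 * sqrt w) has_real_derivative (-2 * (inverse (sqrt x) / 2))) (at x)"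
      using x by (intro DERIV_cmult DERIV_real_sqrt) auto
    moreover have "-2 * (inverse (sqrt x) / 2) = S1 n e x"
      using x by (simp add: S1_def divide_simps)
    ultimately show "((\<lambda>w. -2 * sqrt w) has_vector_derivative S1 n e x) (at x)"
      by (simp add: has_real_derivative_iff_has_vector_derivative)
  qed
  then show ?thesis by simp
qed

lemma piece2:
  assumes e: "0 < e" "e < 1" and n: "n \<ge> 1"
  defines "q \<equiv> real n / real (n+1)"
  shows "(S1 n e has_integral ((1 - e) powr q / q)) {e..1}"
proof -
  have q: "0 < q" "q < 1" using n by (auto simp: q_def divide_simps)
  have "(S1 n e has_integral ((\<lambda>w. -((1-w) powr q)/q) 1 - (\<lambda>w. -((1-w) powr q)/q) e)) {e..1}"
  proof (rule fundamental_theorem_of_calculus_interior)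
    show "e \<le> 1" using e by simp
    show "continuous_on {e..1} (\<lambda>w. -((1-w) powr q)/q)"
      using q by (intro continuous_intros continuous_on_powr') auto
    fix x assume x: "x \<in> {e<..<1}"
    have "((\<lambda>w. -((1-w) powr q)/q) has_real_derivative (- (q * (1-x) powr (q-1) * (-1)) / q)) (at x)"
      using x by (auto intro!: derivative_eq_intros)
    moreover have "- (q * (1-x) powr (q-1) * (-1)) / q = S1 n e x"
    proof -
      have "q - 1 = - (1 / real (n+1))" unfolding q_def by (simp add: field_simps)
      then show ?thesis using x q by (simp add: S1_def powr_minus_divide)
    qed
    ultimately show "((\<lambda>w. -((1-w) powr q)/q) has_vector_derivative S1 n e x) (at x)"
      by (simp add: has_real_derivative_iff_has_vector_derivative)
  qed
  then show ?thesis by simp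
qed


lemma S1_meas: "S1 n e \<in> borel_measurable borel"
  unfolding S1_def by measurable

lemma total:
  assumes e: "0 < e" "e < 1" and n: "n \<ge> 1"
  defines "q \<equiv> real n / real (n+1)"
  shows "set_integrable lborel {0..1} (S1 n e) \<and>
         (LINT w:{0..1}|lborel. S1 n e w) = (1 - e) powr q / q - 2 * sqrt e"
proof -
  have p1: "(S1 n e has_integral (- 2 * sqrt e)) {0..e}" using piece1 e by blast
  have p2: "(S1 n e has_integral ((1 - e) powr q / q)) {e..1}" using piece2 e n q_def by blast
  have hI: "(S1 n e has_integral ((1 - e) powr q / q - 2 * sqrt e)) {0..1}"
    using has_integral_combine[OF _ _ p1 p2] e by simp
  have i1: "(\<lambda>w. 1 / sqrt w) integrable_on {0..e}"
  proof (rule integrable_spike[where S="{e}" and f="\<lambda>w. - S1 n e w"])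
    show "(\<lambda>w. - S1 n e w) integrable_on {0..e}" using p1 by (intro integrable_neg) (auto simp: integrable_on_def)
  qed (auto simp: S1_def)
  have a1: "(\<lambda>w. 1 / sqrt w) absolutely_integrable_on {0..e}"
    by (rule nonnegative_absolutely_integrable_1[OF i1]) auto
  have a1': "S1 n e absolutely_integrable_on {0..e}"
  proof (rule absolutely_integrable_spike[where S="{e}", OF set_integrable_mult_right[where a="-1", OF a1]])
  qed (auto simp: S1_def)
  have a2: "S1 n e absolutely_integrable_on {e..1}"
  proof (rule nonnegative_absolutely_integrable_1)
    show "S1 n e integrable_on {e..1}" using p2 by (auto simp: integrable_on_def)
  qed (auto simp: S1_def)
  have "S1 n e absolutely_integrable_on ({0..e} \<union> {e..1})"
    by (rule absolutely_integrable_Un[OF a1' a2])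
  moreover have "{0..e} \<union> {e..1} = {0..1::real}" using e by auto
  ultimately have A: "set_integrable lebesgue {0..1} (S1 n e)" by simp
  have M: "(\<lambda>x. indicator {0..1::real} x *\<^sub>R S1 n e x) \<in> borel_measurable lborel"
    using S1_meas by measurable
  have SI: "set_integrable lborel {0..1} (S1 n e)"
    using A integrable_completion[OF M] unfolding set_integrable_def by simp
  have "(LINT w:{0..1}|lborel. S1 n e w) = (LINT w:{0..1}|lebesgue. S1 n e w)"
    unfolding set_lebesgue_integral_def using integral_completion[OF M] by simp
  also have "\<dots> = integral {0..1} (S1 n e)" by (rule set_lebesgue_integral_eq_integral(2)[OF A])
  also have "\<dots> = (1 - e) powr q / q - 2 * sqrt e" using hI by (rule integral_unique)
  finally show ?thesis using SI by simp
qed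


lemma root:
  assumes n: "n \<ge> 1"
  defines "q \<equiv> real n / real (n+1)"
  shows "\<exists>e. 0 < e \<and> e < 1 \<and> e \<le> 1 / real n \<and> (1 - e) powr q / q - 2 * sqrt e = 1"
proof -
  have q: "0 < q" "q < 1" using n by (auto simp: q_def divide_simps)
  let ?F = "\<lambda>e. (1 - e) powr q / q - 2 * sqrt e"
  have F0: "?F 0 = real (n+1) / real n" using q by (simp add: q_def)
  have F0': "?F 0 > 1" unfolding F0 using n by (simp add: divide_simps)
  have cont: "continuous_on {0..1} ?F"
    using q by (intro continuous_intros continuous_on_powr') auto
  obtain x where x: "0 \<le> x" "x \<le> 1" "?F x = 1"
    using IVT2'[of ?F 1 1 0] F0' cont q by force
  have x0: "x \<noteq> 0" using x F0' by auto
  have x1: "x \<noteq> 1" using x q by auto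
  have "(1 - x) powr q \<le> 1" using x q by (intro powr_le1) auto
  then have "(1 - x) powr q / q \<le> 1 / q" using q by (simp add: divide_right_mono)
  also have "1 / q = 1 + 1 / real n" using n by (simp add: q_def field_simps)
  finally have "2 * sqrt x \<le> 1 / real n" using x by linarith
  moreover have "1 / real n \<le> 1" using n by simp
  moreover have "sqrt x \<ge> 0" using x by simp
  ultimately have sx: "sqrt x \<le> 1 / real n" "sqrt x \<le> 1" by linarith+
  have "x = sqrt x * sqrt x" using x by simp
  also have "\<dots> \<le> sqrt x" by (rule mult_left_le_one_le) (use sx x in auto)
  finally have "x \<le> 1 / real n" using sx by linarith
  then show ?thesis using x x0 x1 by (intro exI[of _ x]) auto
qed

theorem lemma6p1:
  shows "\<exists>\<epsilon> :: nat \<Rightarrow> real.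
    (\<forall>n\<ge>1. 0 < \<epsilon> n \<and> \<epsilon> n < 1 \<and>
       set_integrable lborel {0..1} (S1 n (\<epsilon> n)) \<and>
       (LINT w:{0..1}|lborel. S1 n (\<epsilon> n) w) = 1) \<and>
    \<epsilon> \<longlonglongrightarrow> 0"
proof -
  define P where "P n e \<longleftrightarrow> 0 < e \<and> e < 1 \<and> e \<le> 1 / real n \<and>
      (1 - e) powr (real n / real (n+1)) / (real n / real (n+1)) - 2 * sqrt e = 1" for n e
  define \<epsilon> where "\<epsilon> n = (SOME e. P n e)" for n
  have P: "P n (\<epsilon> n)" if "n \<ge> 1" for n
    unfolding \<epsilon>_def by (rule someI_ex) (use root[OF that] in \<open>simp add: P_def\<close>)
  have A: "\<forall>n\<ge>1. 0 < \<epsilon> n \<and> \<epsilon> n < 1 \<and>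
       set_integrable lborel {0..1} (S1 n (\<epsilon> n)) \<and>
       (LINT w:{0..1}|lborel. S1 n (\<epsilon> n) w) = 1"
  proof (intro allI impI)
    fix n :: nat assume n: "n \<ge> 1"
    from P[OF n] have p: "0 < \<epsilon> n" "\<epsilon> n < 1"
      "(1 - \<epsilon> n) powr (real n / real (n+1)) / (real n / real (n+1)) - 2 * sqrt (\<epsilon> n) = 1"
      by (auto simp: P_def)
    show "0 < \<epsilon> n \<and> \<epsilon> n < 1 \<and> set_integrable lborel {0..1} (S1 n (\<epsilon> n)) \<and>
       (LINT w:{0..1}|lborel. S1 n (\<epsilon> n) w) = 1"
      using total[OF p(1,2) n] p by simp
  qed
  have B: "\<epsilon> \<longlonglongrightarrow> 0"
  proof (rule tendsto_sandwich[where f="\<lambda>_. 0" and h="\<lambda>n. 1 / real n"])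
    show "\<forall>\<^sub>F n in sequentially. 0 \<le> \<epsilon> n"
      using eventually_ge_at_top[of 1] by eventually_elim (use P in \<open>auto simp: P_def less_imp_le\<close>)
    show "\<forall>\<^sub>F n in sequentially. \<epsilon> n \<le> 1 / real n"
      using eventually_ge_at_top[of 1] by eventually_elim (use P in \<open>auto simp: P_def\<close>)
    show "(\<lambda>n. 1 / real n) \<longlonglongrightarrow> 0" by (rule lim_1_over_n)
  qed simp
  show ?thesis using A B by blast
qed

end
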